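(* Let $A\subset\mathbb N$ be a translate of an SIP set, i.e. suppose there exist an infinite set $L\subset\mathbb N$ and $u\in\mathbb Z$ with $(SIP(L)+u)\cap\mathbb N\subset A$. Then for every odd positive integer $K$, the map $\pi_K\circ z:A\to\mathbb Z/K\mathbb Z$ is surjective, where $\pi_K:\mathbb Z\to\mathbb Z/K\mathbb Z$ is the quotient map.
   Context: $\mathbb N=\{1,2,\dots\}$. For a finite $F\subset\mathbb Z$, $\sigma_F$ is the sum of its elements ($\sigma_\emptyset=0$); for $A\subset\mathbb Z$, $IP(A)=\{\sigma_F:F\subset A\text{ finite}\}$ and $SIP(A)=\{a-b:a,b\in IP(A)\}$. Every integer $t$ has a unique balanced ternary expansion $t=\sum_{n\in\mathbb N}\epsilon_n3^{n-1}$ with $\epsilon_n\in\{-1,0,1\}$, finitely many nonzero; let $r(t)$ be the number of nonzero digits and $j_1(t)<\dots<j_{r(t)}(t)$ their indices. The sign change count $z:\mathbb N\to\mathbb Z_+$ is $z(t)=\#\{i\in\{1,\dots,r(t)-1\}:\epsilon_{j_i(t)}\epsilon_{j_{i+1}(t)}<0\}$ (the number of sign changes between consecutive nonzero digits; in particular $z(3^{n-1})=0$). *)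

theory Defs
  imports "HOL-Number_Theory.Number_Theory"
begin

definition IP :: "int set \<Rightarrow> int set" where
  "IP A = {sum id F | F. F \<subseteq> A \<and> finite F}"

definition SIP :: "int set \<Rightarrow> int set" where
  "SIP A = {a - b | a b. a \<in> IP A \<and> b \<in> IP A}"

text \<open>Balanced ternary digit sequence: digits indexed by n = 1,2,... (value at 0 is 0),
  digit n carries weight 3^(n-1). Defined as the unique such expansion.\<close>
definition is_bt_expansion :: "int \<Rightarrow> (nat \<Rightarrow> int) \<Rightarrow> bool" where
  "is_bt_expansion t e \<longleftrightarrow>
     e 0 = 0 \<and> (\<forall>n. e n \<in> {-1, 0, 1}) \<and> finite {n. e n \<noteq> 0} \<and>
     t = (\<Sum>n\<in>{n. e n \<noteq> 0}. e n * 3 ^ (n - 1))"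

definition bt_digit :: "int \<Rightarrow> nat \<Rightarrow> int" where
  "bt_digit t = (THE e. is_bt_expansion t e)"

definition bt_support :: "int \<Rightarrow> nat list" where
  "bt_support t = sorted_list_of_set {n. bt_digit t n \<noteq> 0}"

definition zsc :: "int \<Rightarrow> nat" where
  "zsc t = card {i. i + 1 < length (bt_support t) \<and>
                    bt_digit t (bt_support t ! i) * bt_digit t (bt_support t ! (i + 1)) < 0}"

end

theory Submission
  imports Defs
begin


definition bd :: "int \<Rightarrow> int" where
  "bd t = (if t mod 3 = 2 then -1 else t mod 3)"

lemma bd_range: "bd t \<in> {-1,0,1}"
  unfolding bd_def by auto

lemma bd_dvd: "3 dvd (t - bd t)"
  unfolding bd_def by (auto simp: dvd_def) presburger+

fun btd :: "int \<Rightarrow> nat \<Rightarrow> int" where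
  "btd t 0 = 0"
| "btd t (Suc 0) = bd t"
| "btd t (Suc (Suc n)) = btd ((t - bd t) div 3) (Suc n)"

lemma btd_range: "btd t n \<in> {-1,0,1}"
  by (induction t n rule: btd.induct) (auto, metis bd_range insertE singletonD)

lemma bd_zero[simp]: "bd 0 = 0" by (simp add: bd_def)

lemma btd_zero[simp]: "btd 0 n = 0"
  by (induction "0::int" n rule: btd.induct) auto

lemma shrink:
  assumes "2 * \<bar>t\<bar> < 3 * P" "odd P"
  shows "2 * \<bar>(t - bd t) div 3\<bar> < P"
proof -
  obtain q where q: "t - bd t = 3 * q" using bd_dvd by blast
  have "(t - bd t) div 3 = q" using q by simp
  moreover have "bd t \<in> {-1,0,1}" by (rule bd_range)
  ultimately show ?thesis using assms q by (auto simp: abs_if) presburger+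
qed

lemma btd_vanish:
  "2 * \<bar>t\<bar> < 3 ^ N \<Longrightarrow> N < n \<Longrightarrow> btd t n = 0"
proof (induction N arbitrary: t n)
  case 0
  then have "t = 0" by simp
  then show ?case by simp
next
  case (Suc N)
  then obtain m where m: "n = Suc (Suc m)" by (cases n; cases "n - 1") auto
  have "2 * \<bar>(t - bd t) div 3\<bar> < 3 ^ N"
    by (rule shrink) (use Suc.prems in auto)
  then show ?case using Suc m by simp
qed

lemma btd_sum:
  "2 * \<bar>t\<bar> < 3 ^ N \<Longrightarrow> t = (\<Sum>n<N. btd t (Suc n) * 3 ^ n)"
proof (induction N arbitrary: t)
  case 0
  then show ?case by simp
next
  case (Suc N)
  have h: "2 * \<bar>(t - bd t) div 3\<bar> < 3 ^ N"
    by (rule shrink) (use Suc.prems in auto)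
  have "(\<Sum>n<Suc N. btd t (Suc n) * 3 ^ n)
      = bd t + (\<Sum>n<N. btd ((t - bd t) div 3) (Suc n) * 3 ^ n) * 3"
    unfolding sum.lessThan_Suc_shift by (simp add: sum_distrib_right sum_distrib_left mult.assoc mult.commute)
  also have "\<dots> = t" using Suc.IH[OF h] bd_dvd[of t] by auto
  finally show ?case by simp
qed

lemma supp_sum:
  fixes e :: "nat \<Rightarrow> int"
  assumes "\<forall>n>N. e n = 0" "e 0 = 0"
  shows "(\<Sum>n\<in>{n. e n \<noteq> 0}. e n * 3^(n-1)) = (\<Sum>n<N. e (Suc n) * 3^n)"
proof -
  have sub: "{n. e n \<noteq> 0} \<subseteq> {1..N}" proof
    fix n assume "n \<in> {n. e n \<noteq> 0}"
    then have "e n \<noteq> 0" by simp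
    then have "n \<noteq> 0" using assms(2) by (metis)
    moreover have "\<not> n > N" using \<open>e n \<noteq> 0\<close> assms(1) by auto
    ultimately show "n \<in> {1..N}" by simp
  qed
  have "(\<Sum>n\<in>{n. e n \<noteq> 0}. e n * 3^(n-1)) = (\<Sum>n\<in>{1..N}. e n * 3^(n-1))"
    by (rule sum.mono_neutral_left) (use sub in auto)
  also have "{1..N} = Suc ` {..<N}" proof
    show "{1..N} \<subseteq> Suc ` {..<N}"
    proof
      fix n assume "n \<in> {1..N}"
      then have "n = Suc (n - 1)" "n - 1 < N" by auto
      then show "n \<in> Suc ` {..<N}" by blast
    qed
  qed auto
  also have "(\<Sum>n\<in>Suc ` {..<N}. e n * 3^(n-1)) = (\<Sum>n<N. e (Suc n) * 3^n)"
    by (subst sum.reindex) auto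
  finally show ?thesis .
qed

lemma exists_pow3: "\<exists>N. (x::int) < 3 ^ N"
proof (cases "x \<le> 0")
  case True then show ?thesis by (intro exI[of _ 0]) auto
next
  case False
  have "nat x < 2 ^ nat x" by (rule less_exp)
  also have "(2::nat) ^ nat x \<le> 3 ^ nat x" by (rule power_mono) auto
  finally have "int (nat x) < int (3 ^ nat x)" by linarith
  then show ?thesis using False by (intro exI[of _ "nat x"]) auto
qed

lemma btd_exp: "is_bt_expansion t (btd t)"
proof -
  obtain N where N: "2 * \<bar>t\<bar> < 3 ^ N" using exists_pow3 by blast
  have z: "\<forall>n>N. btd t n = 0" using btd_vanish[OF N] by blast
  have "finite {n. btd t n \<noteq> 0}"
    by (rule finite_subset[of _ "{..N}"]) (use z in \<open>auto simp: not_le[symmetric]\<close>)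
  moreover have "t = (\<Sum>n\<in>{n. btd t n \<noteq> 0}. btd t n * 3 ^ (n - 1))"
    using supp_sum[OF z] btd_sum[OF N] by simp
  ultimately show ?thesis unfolding is_bt_expansion_def using btd_range by auto
qed

lemma btd_unique_aux:
  fixes e :: "nat \<Rightarrow> int"
  assumes "e 0 = 0" "\<forall>n. e n \<in> {-1,0,1}" "\<forall>n>N. e n = 0"
    "t = (\<Sum>n<N. e (Suc n) * 3^n)"
  shows "e = btd t"
  using assms
proof (induction N arbitrary: t e)
  case 0
  then have "\<forall>n. e n = 0" by (metis neq0_conv)
  then show ?case using 0 by auto
next
  case (Suc N)
  define S where "S = (\<Sum>n<N. e (Suc (Suc n)) * 3^n)"
  have t: "t = e 1 + 3 * S"
    using Suc.prems(4) unfolding S_def sum.lessThan_Suc_shift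
    by (simp add: sum_distrib_left mult_ac)
  have e1: "e 1 \<in> {-1,0,1}" using Suc.prems(2) by blast
  have bdt: "bd t = e 1"
    using e1 unfolding t bd_def by auto
  have S: "(t - bd t) div 3 = S" using t bdt by simp
  define e' where "e' = (\<lambda>n. if n = 0 then 0 else e (Suc n))"
  have "e' = btd S"
    by (rule Suc.IH) (use Suc.prems in \<open>auto simp: e'_def S_def\<close>)
  show ?case
  proof
    fix n show "e n = btd t n"
    proof (cases n)
      case 0 then show ?thesis using Suc.prems by simp
    next
      case (Suc m)
      show ?thesis
      proof (cases m)
        case 0 then show ?thesis using Suc bdt by simp
      next
        case (Suc k)
        have "e (Suc (Suc k)) = e' (Suc k)" by (simp add: e'_def)
        then show ?thesis using \<open>e' = btd S\<close> S \<open>n = Suc m\<close> Suc by simp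
      qed
    qed
  qed
qed

lemma btd_unique:
  assumes "is_bt_expansion t e" shows "e = btd t"
proof -
  have f: "finite {n. e n \<noteq> 0}" and e0: "e 0 = 0" and r: "\<forall>n. e n \<in> {-1,0,1}"
    and t: "t = (\<Sum>n\<in>{n. e n \<noteq> 0}. e n * 3 ^ (n - 1))"
    using assms unfolding is_bt_expansion_def by auto
  define N where "N = Max (insert 0 {n. e n \<noteq> 0})"
  have z: "\<forall>n>N. e n = 0" using f unfolding N_def
    by (metis (mono_tags, lifting) Max_ge finite_insert insertCI leD mem_Collect_eq)
  show ?thesis
    by (rule btd_unique_aux[OF e0 r z]) (use t supp_sum[OF z e0] in simp)
qed

lemma bt_digit_eq: "bt_digit t = btd t"
  unfolding bt_digit_def
  by (metis the_equality btd_exp btd_unique)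



lemma btd_neg: "btd (-t) = (\<lambda>n. - btd t n)"
proof -
  obtain N where N: "2 * \<bar>t\<bar> < 3 ^ N" using exists_pow3 by blast
  have "(\<lambda>n. - btd t n) = btd (-t)"
  proof (rule btd_unique_aux[where N=N])
    show "\<forall>n. - btd t n \<in> {-1,0,1}"
    proof
      fix n show "- btd t n \<in> {-1,0,1}" using btd_range[of t n] by auto
    qed
    show "\<forall>n>N. - btd t n = 0" using btd_vanish[OF N] by auto
    show "- t = (\<Sum>n<N. - btd t (Suc n) * 3 ^ n)"
      using btd_sum[OF N] by (simp add: sum_negf)
  qed simp
  then show ?thesis by simp
qed

lemma bd_add3: "bd (x + 3 * y) = bd x"
  unfolding bd_def by simp

lemma btd_low: "n \<le> M \<Longrightarrow> btd (3 ^ M * q) n = 0"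
proof (induction M arbitrary: n)
  case 0 then show ?case by simp
next
  case (Suc M)
  show ?case
  proof (cases n)
    case 0 then show ?thesis by simp
  next
    case (Suc m)
    have bd0: "bd (3 ^ Suc M * q) = 0" using bd_add3[of 0 "3^M*q"] by (simp add: mult.assoc)
    show ?thesis
    proof (cases m)
      case 0 then show ?thesis using Suc bd0 by simp
    next
      case (Suc k)
      have "btd (3 ^ Suc M * q) n = btd (3 ^ M * q) (Suc k)"
        using \<open>n = Suc m\<close> Suc bd0 by (simp add: mult.assoc)
      also have "\<dots> = 0" using Suc.IH \<open>n = Suc m\<close> Suc Suc.prems by simp
      finally show ?thesis .
    qed
  qed
qed

lemma btd_add: "2 * \<bar>a\<bar> < 3 ^ M \<Longrightarrow> btd (a + 3 ^ M * q) n = btd a n + btd (3 ^ M * q) n"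
proof (induction M arbitrary: a n)
  case 0 then have "a = 0" by simp
  then show ?case by simp
next
  case (Suc M)
  have bd0: "bd (3 ^ Suc M * q) = 0" using bd_add3[of 0 "3^M*q"] by (simp add: mult.assoc)
  have bda: "bd (a + 3 ^ Suc M * q) = bd a" using bd_add3[of a "3^M*q"] by (simp add: mult.assoc)
  define a' where "a' = (a - bd a) div 3"
  have a': "2 * \<bar>a'\<bar> < 3 ^ M" unfolding a'_def by (rule shrink) (use Suc.prems in auto)
  have div: "(a + 3 ^ Suc M * q - bd a) div 3 = a' + 3 ^ M * q"
    using bd_dvd[of a] unfolding a'_def by auto
  show ?case
  proof (cases n)
    case 0 then show ?thesis by simp
  next
    case (Suc m)
    show ?thesis
    proof (cases m)
      case 0 then show ?thesis using Suc bd0 bda by simp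
    next
      case (Suc k)
      have "btd (a + 3 ^ Suc M * q) n = btd (a' + 3 ^ M * q) (Suc k)"
        using \<open>n = Suc m\<close> Suc bda div by simp
      also have "\<dots> = btd a' (Suc k) + btd (3 ^ M * q) (Suc k)" by (rule Suc.IH[OF a'])
      also have "\<dots> = btd a n + btd (3 ^ Suc M * q) n"
        using \<open>n = Suc m\<close> Suc bd0 by (simp add: a'_def mult.assoc)
      finally show ?thesis .
    qed
  qed
qed

definition dsl :: "int \<Rightarrow> int list" where
  "dsl t = map (bt_digit t) (bt_support t)"

lemma finite_supp: "finite {n. btd t n \<noteq> 0}"
  using btd_exp[of t] unfolding is_bt_expansion_def by auto

lemma dsl_def2: "dsl t = map (btd t) (sorted_list_of_set {n. btd t n \<noteq> 0})"
  unfolding dsl_def bt_support_def bt_digit_eq ..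

lemma sorted_union:
  fixes A B :: "nat set"
  assumes "finite A" "finite B" "\<forall>x\<in>A. \<forall>y\<in>B. x < y"
  shows "sorted_list_of_set (A \<union> B) = sorted_list_of_set A @ sorted_list_of_set B"
proof -
  have d: "A \<inter> B = {}" using assms(3) by auto
  show ?thesis
    using assms d
    by (subst sorted_list_of_set_unique[symmetric])
       (auto simp: sorted_wrt_append card_Un_disjoint)
qed

lemma dsl_concat:
  assumes "3 ^ M dvd d" "2 * \<bar>a\<bar> < 3 ^ M"
  shows "dsl (a + d) = dsl a @ dsl d"
proof -
  obtain q where d: "d = 3 ^ M * q" using assms(1) by blast
  have add: "\<And>n. btd (a + d) n = btd a n + btd d n" using btd_add[OF assms(2)] d by simp
  have va: "\<And>n. btd a n \<noteq> 0 \<Longrightarrow> n \<le> M" using btd_vanish[OF assms(2)] by (meson not_le)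
  have vd: "\<And>n. btd d n \<noteq> 0 \<Longrightarrow> M < n" using btd_low d by (meson not_le)
  have S: "{n. btd (a + d) n \<noteq> 0} = {n. btd a n \<noteq> 0} \<union> {n. btd d n \<noteq> 0}"
  proof (rule Set.set_eqI)
    fix n
    have "\<not> (btd a n \<noteq> 0 \<and> btd d n \<noteq> 0)" using va[of n] vd[of n] by linarith
    then show "n \<in> {n. btd (a + d) n \<noteq> 0} \<longleftrightarrow> n \<in> {n. btd a n \<noteq> 0} \<union> {n. btd d n \<noteq> 0}"
      using add[of n] by auto
  qed
  have ord: "\<forall>x\<in>{n. btd a n \<noteq> 0}. \<forall>y\<in>{n. btd d n \<noteq> 0}. x < y"
    using va vd by (meson le_less_trans mem_Collect_eq)
  have L: "sorted_list_of_set {n. btd (a + d) n \<noteq> 0} =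
     sorted_list_of_set {n. btd a n \<noteq> 0} @ sorted_list_of_set {n. btd d n \<noteq> 0}"
    unfolding S by (rule sorted_union[OF finite_supp finite_supp ord])
  show ?thesis unfolding dsl_def2 L map_append
  proof (intro arg_cong2[where f="(@)"] map_cong refl)
    fix n assume "n \<in> set (sorted_list_of_set {n. btd a n \<noteq> 0})"
    then have "btd a n \<noteq> 0" using finite_supp by auto
    then have "btd d n = 0" by (meson va vd not_le)
    then show "btd (a + d) n = btd a n" using add by simp
  next
    fix n assume "n \<in> set (sorted_list_of_set {n. btd d n \<noteq> 0})"
    then have "btd d n \<noteq> 0" using finite_supp by auto
    then have "btd a n = 0" by (meson va vd not_le)
    then show "btd (a + d) n = btd d n" using add by simp
  qed
qed

lemma dsl_neg: "dsl (-t) = map uminus (dsl t)"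
  unfolding dsl_def2 btd_neg by simp

lemma dsl_mem: "x \<in> set (dsl t) \<Longrightarrow> x = 1 \<or> x = -1"
  unfolding dsl_def2 using finite_supp btd_range by auto

lemma dsl_nonempty: "t \<noteq> 0 \<Longrightarrow> dsl t \<noteq> []"
proof -
  assume t: "t \<noteq> 0"
  have "{n. btd t n \<noteq> 0} \<noteq> {}"
  proof
    assume "{n. btd t n \<noteq> 0} = {}"
    then have "t = 0" using btd_exp[of t] unfolding is_bt_expansion_def by simp
    then show False using t by simp
  qed
  then show ?thesis unfolding dsl_def2 using finite_supp by simp
qed

fun sc :: "int list \<Rightarrow> nat" where
  "sc (a # b # xs) = (if a * b < 0 then 1 else 0) + sc (b # xs)"
| "sc _ = 0"

lemma sc_card: "card {i. i + 1 < length xs \<and> xs ! i * xs ! (i + 1) < 0} = sc xs"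
proof (induction xs rule: sc.induct)
  case (1 a b xs)
  define P where "P = (\<lambda>(ys::int list) (i::nat). i + 1 < length ys \<and> ys ! i * ys ! (i + 1) < 0)"
  have e: "{i. P (a # b # xs) i} = {i::nat. i = 0 \<and> a * b < 0} \<union> Suc ` {i. P (b # xs) i}"
    apply (rule Set.set_eqI)
    subgoal for i by (cases i) (auto simp: image_iff P_def)
    done
  have f: "finite {i. P (b # xs) i}" by (rule finite_subset[of _ "{..<length (b#xs)}"]) (auto simp: P_def)
  have "card {i. P (a # b # xs) i} = card {i::nat. i = 0 \<and> a * b < 0} + card (Suc ` {i. P (b # xs) i})"
    unfolding e using f by (intro Finite_Set.card_Un_disjoint) auto
  also have "card (Suc ` {i. P (b # xs) i}) = sc (b # xs)" using 1 by (simp add: card_image P_def)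
  also have "card {i::nat. i = 0 \<and> a * b < 0} = (if a * b < 0 then 1 else 0)" by auto
  finally show ?case by (simp add: P_def)
qed auto

lemma zsc_sc: "zsc t = sc (dsl t)"
proof -
  have "zsc t = card {i. i + 1 < length (dsl t) \<and> dsl t ! i * dsl t ! (i + 1) < 0}"
    unfolding zsc_def dsl_def by (intro arg_cong[where f=card] Collect_cong) auto
  then show ?thesis using sc_card by simp
qed

lemma sc_app: "sc (xs @ ys) = sc xs + sc ys + (if xs \<noteq> [] \<and> ys \<noteq> [] \<and> last xs * hd ys < 0 then 1 else 0)"
proof (induction xs)
  case Nil then show ?case by simp
next
  case (Cons x xs)
  show ?case
  proof (cases xs)
    case Nil then show ?thesis by (cases ys) auto
  next
    case (Cons y zs) then show ?thesis using Cons.IH by simp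
  qed
qed

lemma sc_neg: "sc (map uminus xs) = sc xs"
  by (induction xs rule: sc.induct) auto



lemma step:
  assumes "3 ^ M dvd d" "2 * \<bar>a\<bar> < 3 ^ M" "d \<noteq> 0" "e = 1 \<or> e = -1"
  shows "int (zsc (a + e * d)) = int (zsc a) + int (zsc d) +
           (if dsl a \<noteq> [] \<and> last (dsl a) * (e * hd (dsl d)) < 0 then 1 else 0)
         \<and> dsl (a + e * d) \<noteq> [] \<and> last (dsl (a + e * d)) = e * last (dsl d)"
proof -
  have ne: "dsl d \<noteq> []" using dsl_nonempty[OF assms(3)] .
  have dv: "3 ^ M dvd e * d" using assms(1) by simp
  have cat: "dsl (a + e * d) = dsl a @ dsl (e * d)" by (rule dsl_concat[OF dv assms(2)])
  from assms(4) show ?thesis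
  proof
    assume e: "e = 1"
    show ?thesis using cat ne unfolding e zsc_sc by (simp add: sc_app)
  next
    assume e: "e = -1"
    have n: "dsl (e * d) = map uminus (dsl d)" using dsl_neg[of d] e by simp
    show ?thesis using cat ne unfolding n zsc_sc using e
      by (simp add: sc_app sc_neg hd_map last_map)
  qed
qed

definition Jf :: "int \<Rightarrow> int \<Rightarrow> int \<Rightarrow> (nat \<Rightarrow> int) \<Rightarrow> nat \<Rightarrow> int" where
  "Jf u lo hi \<epsilon> i = (if i = 0 then (if dsl u \<noteq> [] \<and> last (dsl u) * (\<epsilon> 0 * lo) < 0 then 1 else 0)
      else (if \<epsilon> (i - 1) * hi * (\<epsilon> i * lo) < 0 then 1 else 0))"

lemma sum_bound:
  assumes "\<forall>i. \<epsilon> i = 1 \<or> \<epsilon> i = -1"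
  shows "\<bar>(\<Sum>i<j. \<epsilon> i * (d i :: int))\<bar> \<le> (\<Sum>i<j. \<bar>d i\<bar>)"
proof -
  have "\<bar>(\<Sum>i<j. \<epsilon> i * d i)\<bar> \<le> (\<Sum>i<j. \<bar>\<epsilon> i * d i\<bar>)" by (rule sum_abs)
  also have "\<dots> = (\<Sum>i<j. \<bar>d i\<bar>)"
  proof (intro sum.cong refl)
    fix i show "\<bar>\<epsilon> i * d i\<bar> = \<bar>d i\<bar>" using assms[rule_format, of i] by (auto simp: abs_mult)
  qed
  finally show ?thesis .
qed

lemma chain:
  fixes d \<epsilon> :: "nat \<Rightarrow> int" and Mb :: "nat \<Rightarrow> nat"
  assumes blk: "\<forall>i<n. 3 ^ (Mb i) dvd d i \<and> 2 * (\<bar>u\<bar> + (\<Sum>j<i. \<bar>d j\<bar>)) < 3 ^ (Mb i) \<and> d i \<noteq> 0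
       \<and> hd (dsl (d i)) = lo \<and> last (dsl (d i)) = hi"
    and eps: "\<forall>i. \<epsilon> i = 1 \<or> \<epsilon> i = -1"
  shows "j \<le> n \<Longrightarrow> int (zsc (u + (\<Sum>i<j. \<epsilon> i * d i))) = int (zsc u) + (\<Sum>i<j. int (zsc (d i)) + Jf u lo hi \<epsilon> i)
     \<and> (j > 0 \<longrightarrow> dsl (u + (\<Sum>i<j. \<epsilon> i * d i)) \<noteq> [] \<and> last (dsl (u + (\<Sum>i<j. \<epsilon> i * d i))) = \<epsilon> (j - 1) * hi)"
proof (induction j)
  case 0 then show ?case by simp
next
  case (Suc j)
  let ?p = "u + (\<Sum>i<j. \<epsilon> i * d i)"
  have jn: "j < n" using Suc.prems by simp
  have b: "3 ^ (Mb j) dvd d j" "2 * (\<bar>u\<bar> + (\<Sum>i<j. \<bar>d i\<bar>)) < 3 ^ (Mb j)" "d j \<noteq> 0"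
     "hd (dsl (d j)) = lo" "last (dsl (d j)) = hi"
    using blk jn by auto
  have sb: "\<bar>?p\<bar> \<le> \<bar>u\<bar> + (\<Sum>i<j. \<bar>d i\<bar>)" using sum_bound[OF eps, where j=j and d=d] by linarith
  have pb: "2 * \<bar>?p\<bar> < 3 ^ (Mb j)"
  proof -
    have "2 * \<bar>?p\<bar> \<le> 2 * (\<bar>u\<bar> + (\<Sum>i<j. \<bar>d i\<bar>))" using mult_left_mono[OF sb, of 2] by simp
    then show ?thesis using b(2) by linarith
  qed
  have st: "int (zsc (?p + \<epsilon> j * d j)) = int (zsc ?p) + int (zsc (d j)) +
           (if dsl ?p \<noteq> [] \<and> last (dsl ?p) * (\<epsilon> j * lo) < 0 then 1 else 0)
         \<and> dsl (?p + \<epsilon> j * d j) \<noteq> [] \<and> last (dsl (?p + \<epsilon> j * d j)) = \<epsilon> j * hi"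
    using step[OF b(1) pb b(3), of "\<epsilon> j"] eps b(4,5) by simp
  have IH: "int (zsc ?p) = int (zsc u) + (\<Sum>i<j. int (zsc (d i)) + Jf u lo hi \<epsilon> i)"
     "j > 0 \<longrightarrow> dsl ?p \<noteq> [] \<and> last (dsl ?p) = \<epsilon> (j - 1) * hi"
    using Suc.IH jn by auto
  have J: "(if dsl ?p \<noteq> [] \<and> last (dsl ?p) * (\<epsilon> j * lo) < 0 then 1 else 0) = Jf u lo hi \<epsilon> j"
  proof (cases j)
    case 0 then show ?thesis by (simp add: Jf_def)
  next
    case (Suc m) then show ?thesis using IH(2) by (simp add: Jf_def mult.assoc)
  qed
  have eq: "u + (\<Sum>i<Suc j. \<epsilon> i * d i) = ?p + \<epsilon> j * d j" by simp
  show ?case unfolding eq using st IH(1) J by simp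
qed



lemma sip_mem:
  fixes X Y \<epsilon> :: "nat \<Rightarrow> int"
  assumes L: "\<forall>i<n. X i \<in> L \<and> Y i \<in> L" and ix: "inj_on X {..<n}" and iy: "inj_on Y {..<n}"
    and dj: "X ` {..<n} \<inter> Y ` {..<n} = {}" and eps: "\<forall>i. \<epsilon> i = 1 \<or> \<epsilon> i = -1"
  shows "(\<Sum>i<n. \<epsilon> i * (X i - Y i)) \<in> SIP L"
proof -
  define f where "f i = (if \<epsilon> i = 1 then X i else Y i)" for i
  define g where "g i = (if \<epsilon> i = 1 then Y i else X i)" for i
  have XY: "X i \<noteq> Y j" if "i < n" "j < n" for i j using dj that by blast
  have injf: "inj_on f {..<n}"
  proof (rule inj_onI)
    fix i j assume i: "i \<in> {..<n}" and j: "j \<in> {..<n}" and e: "f i = f j"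
    show "i = j"
      using e i j XY[of i j] XY[of j i] inj_onD[OF ix, of i j] inj_onD[OF iy, of i j]
      unfolding f_def by (auto split: if_splits)
  qed
  have injg: "inj_on g {..<n}"
  proof (rule inj_onI)
    fix i j assume i: "i \<in> {..<n}" and j: "j \<in> {..<n}" and e: "g i = g j"
    show "i = j"
      using e i j XY[of i j] XY[of j i] inj_onD[OF ix, of i j] inj_onD[OF iy, of i j]
      unfolding g_def by (auto split: if_splits)
  qed
  have F: "sum id (f ` {..<n}) = (\<Sum>i<n. f i)" using sum.reindex[OF injf, of id] by simp
  have G: "sum id (g ` {..<n}) = (\<Sum>i<n. g i)" using sum.reindex[OF injg, of id] by simp
  have "(\<Sum>i<n. \<epsilon> i * (X i - Y i)) = (\<Sum>i<n. f i - g i)"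
  proof (rule sum.cong[OF refl])
    fix i show "\<epsilon> i * (X i - Y i) = f i - g i" using eps[rule_format, of i] unfolding f_def g_def by auto
  qed
  also have "\<dots> = sum id (f ` {..<n}) - sum id (g ` {..<n})" unfolding F G by (rule sum_subtractf)
  finally have eq: "(\<Sum>i<n. \<epsilon> i * (X i - Y i)) = sum id (f ` {..<n}) - sum id (g ` {..<n})" .
  have fL: "f ` {..<n} \<subseteq> L" using L unfolding f_def by auto
  have gL: "g ` {..<n} \<subseteq> L" using L unfolding g_def by auto
  have "sum id (f ` {..<n}) \<in> IP L" unfolding IP_def using fL by blast
  moreover have "sum id (g ` {..<n}) \<in> IP L" unfolding IP_def using gL by blast
  ultimately show ?thesis unfolding eq SIP_def by blast
qed

lemma good_class:
  fixes cls :: "int \<Rightarrow> 'c" and L :: "int set"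
  assumes inf: "infinite L" and fC: "finite C" and cl: "\<forall>x\<in>L. \<forall>y\<in>L. x \<noteq> y \<longrightarrow> cls (x - y) \<in> C"
  shows "\<exists>c\<in>C. \<forall>(M::nat) E. finite E \<longrightarrow> (\<exists>x y. x \<in> L \<and> y \<in> L \<and> x \<notin> E \<and> y \<notin> E \<and> x \<noteq> y
            \<and> (3::int) ^ M dvd (x - y) \<and> cls (x - y) = c)"
proof (rule ccontr)
  assume nt: "\<not> ?thesis"
  have "\<exists>p. finite (snd p) \<and> \<not> (\<exists>x y. x \<in> L \<and> y \<in> L \<and> x \<notin> snd p \<and> y \<notin> snd p \<and> x \<noteq> y
            \<and> (3::int) ^ (fst p) dvd (x - y) \<and> cls (x - y) = c)" if cC: "c \<in> C" for c
  proof -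
    have "\<not> (\<forall>(M::nat) E. finite E \<longrightarrow> (\<exists>x y. x \<in> L \<and> y \<in> L \<and> x \<notin> E \<and> y \<notin> E \<and> x \<noteq> y
            \<and> (3::int) ^ M dvd (x - y) \<and> cls (x - y) = c))" (is "\<not> ?P")
    proof
      assume "?P"
      then have "\<exists>c\<in>C. \<forall>(M::nat) E. finite E \<longrightarrow> (\<exists>x y. x \<in> L \<and> y \<in> L \<and> x \<notin> E \<and> y \<notin> E \<and> x \<noteq> y
            \<and> (3::int) ^ M dvd (x - y) \<and> cls (x - y) = c)"
        by (rule bexI[where x=c]) (rule cC)
      then show False using nt by (rule notE[rotated])
    qed
    then obtain M E where "finite E" "\<not> (\<exists>x y. x \<in> L \<and> y \<in> L \<and> x \<notin> E \<and> y \<notin> E \<and> x \<noteq> y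
            \<and> (3::int) ^ M dvd (x - y) \<and> cls (x - y) = c)"
      by (simp only: not_all not_imp) (elim exE conjE, rule that)
    then show ?thesis by (intro exI[of _ "(M, E)"]) (simp only: fst_conv snd_conv simp_thms)
  qed
  then have "\<forall>c\<in>C. \<exists>p. finite (snd p) \<and> \<not> (\<exists>x y. x \<in> L \<and> y \<in> L \<and> x \<notin> snd p \<and> y \<notin> snd p \<and> x \<noteq> y
            \<and> (3::int) ^ (fst p) dvd (x - y) \<and> cls (x - y) = c)" by (rule ballI)
  then obtain pf where h0: "\<forall>c\<in>C. finite (snd (pf c)) \<and> \<not> (\<exists>x y. x \<in> L \<and> y \<in> L \<and> x \<notin> snd (pf c) \<and> y \<notin> snd (pf c) \<and> x \<noteq> y
            \<and> (3::int) ^ (fst (pf c)) dvd (x - y) \<and> cls (x - y) = c)"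
    by (rule bchoice[THEN exE]) (rule that)
  define Mf where "Mf c = fst (pf c)" for c
  define Ef where "Ef c = snd (pf c)" for c
  have h: "\<forall>c\<in>C. finite (Ef c) \<and> \<not> (\<exists>x y. x \<in> L \<and> y \<in> L \<and> x \<notin> Ef c \<and> y \<notin> Ef c \<and> x \<noteq> y
            \<and> (3::int) ^ (Mf c) dvd (x - y) \<and> cls (x - y) = c)"
    using h0 unfolding Mf_def Ef_def .
  define M0 where "M0 = (\<Sum>c\<in>C. Mf c)"
  define E0 where "E0 = \<Union> (Ef ` C)"
  have fE0: "finite E0" unfolding E0_def using fC h by auto
  define L' where "L' = L - E0"
  have infL': "infinite L'" unfolding L'_def using inf fE0 by auto
  have "\<not> inj_on (\<lambda>x. x mod 3 ^ M0) L'"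
  proof
    assume inj: "inj_on (\<lambda>x. x mod 3 ^ M0) L'"
    have "(\<lambda>x. x mod 3 ^ M0) ` L' \<subseteq> {0..<3 ^ M0}" by auto
    then have "finite ((\<lambda>x. x mod (3::int) ^ M0) ` L')" by (rule finite_subset) simp
    then have "finite L'" using finite_imageD inj by blast
    then show False using infL' by simp
  qed
  then obtain x y where xy: "x \<in> L'" "y \<in> L'" "x \<noteq> y" "x mod 3 ^ M0 = y mod 3 ^ M0"
    unfolding inj_on_def by blast
  have dv: "(3::int) ^ M0 dvd (x - y)" using xy(4) by (simp add: mod_eq_dvd_iff)
  have cC: "cls (x - y) \<in> C" using cl xy unfolding L'_def by auto
  have "Mf (cls (x - y)) \<le> M0" unfolding M0_def by (rule member_le_sum[OF cC]) (use fC in auto)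
  then have "(3::int) ^ Mf (cls (x - y)) dvd 3 ^ M0" by (rule le_imp_power_dvd)
  then have dv2: "(3::int) ^ Mf (cls (x - y)) dvd (x - y)" using dv dvd_trans by blast
  have "x \<notin> Ef (cls (x - y))" "y \<notin> Ef (cls (x - y))" using xy cC unfolding L'_def E0_def by auto
  then show False using h cC xy dv2 unfolding L'_def by blast
qed

lemma build:
  fixes cls :: "int \<Rightarrow> 'c" and L :: "int set" and u :: int
  assumes good: "\<forall>(M::nat) E. finite E \<longrightarrow> (\<exists>x y. x \<in> L \<and> y \<in> L \<and> x \<notin> E \<and> y \<notin> E \<and> x \<noteq> y
            \<and> (3::int) ^ M dvd (x - y) \<and> cls (x - y) = c)"
  shows "\<exists>X Y :: nat \<Rightarrow> int. \<exists>Mb :: nat \<Rightarrow> nat. (\<forall>i<n. X i \<in> L \<and> Y i \<in> L \<and> X i \<noteq> Y i \<and> cls (X i - Y i) = c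
      \<and> 3 ^ (Mb i) dvd (X i - Y i) \<and> 2 * (\<bar>u\<bar> + (\<Sum>j<i. \<bar>X j - Y j\<bar>)) < 3 ^ (Mb i))
      \<and> inj_on X {..<n} \<and> inj_on Y {..<n} \<and> X ` {..<n} \<inter> Y ` {..<n} = {}"
proof (induction n)
  case 0 then show ?case by auto
next
  case (Suc n)
  then obtain X Y :: "nat \<Rightarrow> int" and Mb :: "nat \<Rightarrow> nat" where
    P: "\<forall>i<n. X i \<in> L \<and> Y i \<in> L \<and> X i \<noteq> Y i \<and> cls (X i - Y i) = c
      \<and> 3 ^ (Mb i) dvd (X i - Y i) \<and> 2 * (\<bar>u\<bar> + (\<Sum>j<i. \<bar>X j - Y j\<bar>)) < 3 ^ (Mb i)"
    and ix: "inj_on X {..<n}" and iy: "inj_on Y {..<n}" and dj: "X ` {..<n} \<inter> Y ` {..<n} = {}"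
    by blast
  obtain M where M: "2 * (\<bar>u\<bar> + (\<Sum>j<n. \<bar>X j - Y j\<bar>)) < (3::int) ^ M" using exists_pow3 by blast
  have "finite (X ` {..<n} \<union> Y ` {..<n})" by simp
  then obtain x y where xy: "x \<in> L" "y \<in> L" "x \<notin> X ` {..<n} \<union> Y ` {..<n}" "y \<notin> X ` {..<n} \<union> Y ` {..<n}"
     "x \<noteq> y" "(3::int) ^ M dvd (x - y)" "cls (x - y) = c"
    using good by blast
  define X' where "X' = X(n := x)"
  define Y' where "Y' = Y(n := y)"
  define Mb' where "Mb' = Mb(n := M)"
  have sumeq: "(\<Sum>j<i. \<bar>X' j - Y' j\<bar>) = (\<Sum>j<i. \<bar>X j - Y j\<bar>)" if "i \<le> n" for i
    using that unfolding X'_def Y'_def by (intro sum.cong) auto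
  have A: "\<forall>i<Suc n. X' i \<in> L \<and> Y' i \<in> L \<and> X' i \<noteq> Y' i \<and> cls (X' i - Y' i) = c
      \<and> 3 ^ (Mb' i) dvd (X' i - Y' i) \<and> 2 * (\<bar>u\<bar> + (\<Sum>j<i. \<bar>X' j - Y' j\<bar>)) < 3 ^ (Mb' i)"
  proof (intro allI impI)
    fix i assume i: "i < Suc n"
    show "X' i \<in> L \<and> Y' i \<in> L \<and> X' i \<noteq> Y' i \<and> cls (X' i - Y' i) = c
      \<and> 3 ^ (Mb' i) dvd (X' i - Y' i) \<and> 2 * (\<bar>u\<bar> + (\<Sum>j<i. \<bar>X' j - Y' j\<bar>)) < 3 ^ (Mb' i)"
    proof (cases "i = n")
      case True then show ?thesis using xy M sumeq[of n] unfolding X'_def Y'_def Mb'_def by simp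
    next
      case False then have "i < n" using i by simp
      then show ?thesis using P sumeq[of i] False unfolding X'_def Y'_def Mb'_def by simp
    qed
  qed
  have im: "X' ` {..<n} = X ` {..<n}" "Y' ` {..<n} = Y ` {..<n}" unfolding X'_def Y'_def by auto
  have ix': "inj_on X' {..<Suc n}"
  proof -
    have "inj_on X' {..<n}" using ix unfolding inj_on_def X'_def by auto
    then show ?thesis unfolding lessThan_Suc using xy(3) im(1) by (simp add: X'_def inj_on_insert)
  qed
  have iy': "inj_on Y' {..<Suc n}"
  proof -
    have "inj_on Y' {..<n}" using iy unfolding inj_on_def Y'_def by auto
    then show ?thesis unfolding lessThan_Suc using xy(4) im(2) by (simp add: Y'_def inj_on_insert)
  qed
  have dj': "X' ` {..<Suc n} \<inter> Y' ` {..<Suc n} = {}"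
    unfolding lessThan_Suc image_insert im using dj xy(3,4,5) by (auto simp: X'_def Y'_def)
  show ?case using A ix' iy' dj' by blast
qed

lemma sum_if_lt:
  "(\<Sum>i<m. if i < a then P else Q) = int (min a m) * P + int (m - min a m) * (Q::int)"
proof (induction m)
  case 0 then show ?case by simp
next
  case (Suc m)
  show ?case
  proof (cases "m < a")
    case True
    then have "min a (Suc m) = Suc m" "min a m = m" by auto
    then show ?thesis using Suc True by (simp add: algebra_simps)
  next
    case False
    then have "min a (Suc m) = a" "min a m = a" by auto
    moreover have "Suc m - a = Suc (m - a)" using False by simp
    ultimately show ?thesis using Suc False by (simp add: algebra_simps)
  qed
qed



lemma eps_prod:
  fixes s :: int and k :: nat
  assumes s: "s = 1 \<or> s = -1"
  defines "\<epsilon> \<equiv> \<lambda>i. if i \<le> 2 * k \<and> odd i then -s else s"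
  shows "\<epsilon> i * \<epsilon> (Suc i) = (if i < 2 * k then -1 else 1)"
proof (cases "i < 2 * k")
  case True
  show ?thesis
  proof (cases "odd i")
    case True then show ?thesis using \<open>i < 2 * k\<close> s unfolding \<epsilon>_def by auto
  next
    case False then show ?thesis using \<open>i < 2 * k\<close> s unfolding \<epsilon>_def by auto
  qed
next
  case False
  then have "\<epsilon> (Suc i) = s" unfolding \<epsilon>_def by auto
  moreover have "\<epsilon> i = s"
  proof (cases "i = 2 * k")
    case True then show ?thesis unfolding \<epsilon>_def by auto
  next
    case False then show ?thesis using \<open>\<not> i < 2 * k\<close> unfolding \<epsilon>_def by auto
  qed
  ultimately show ?thesis using False s by auto
qed

lemma cls_in:
  assumes "(d::int) \<noteq> 0" "K > 0"
  shows "(int (zsc d) mod int K, hd (dsl d), last (dsl d), sgn d) \<in> {0..<int K} \<times> {-1,1::int} \<times> {-1,1::int} \<times> {-1,1::int}"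
proof -
  have ne: "dsl d \<noteq> []" using dsl_nonempty[OF assms(1)] .
  have "hd (dsl d) \<in> set (dsl d)" "last (dsl d) \<in> set (dsl d)" using ne by auto
  then have "hd (dsl d) = 1 \<or> hd (dsl d) = -1" "last (dsl d) = 1 \<or> last (dsl d) = -1"
    using dsl_mem by blast+
  moreover have "sgn d = 1 \<or> sgn d = -1" using assms(1) by (auto simp: sgn_if)
  moreover have "int (zsc d) mod int K \<in> {0..<int K}" using assms(2) by auto
  ultimately show ?thesis by auto
qed

theorem theorem4p6:
  fixes A L :: "int set" and u :: int
  assumes "A \<subseteq> {1..}"
    and "L \<subseteq> {1..}" and "infinite L"
    and "{x + u | x. x \<in> SIP L} \<inter> {1..} \<subseteq> A"
  shows "\<forall>K::nat. K > 0 \<and> odd K \<longrightarrow>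
           (\<forall>c::int. \<exists>a\<in>A. [int (zsc a) = c] (mod int K))"
proof (intro allI impI)
  fix K :: nat and c :: int
  assume K: "K > 0 \<and> odd K"
  define cls where "cls d = (int (zsc d) mod int K, hd (dsl d), last (dsl d), sgn d)" for d :: int
  define C where "C = {0..<int K} \<times> {-1,1::int} \<times> {-1,1::int} \<times> {-1,1::int}"
  have fC: "finite C" unfolding C_def by simp
  have clsC: "\<forall>x\<in>L. \<forall>y\<in>L. x \<noteq> y \<longrightarrow> cls (x - y) \<in> C"
  proof (intro ballI impI)
    fix x y assume "x \<in> L" "y \<in> L" "x \<noteq> y"
    then have "x - y \<noteq> 0" by simp
    then show "cls (x - y) \<in> C" unfolding cls_def C_def by (rule cls_in) (use K in simp)
  qed
  obtain c0 where c0C: "c0 \<in> C" and good: "\<forall>(M::nat) E. finite E \<longrightarrow> (\<exists>x y. x \<in> L \<and> y \<in> L \<and> x \<notin> E \<and> y \<notin> E \<and> x \<noteq> y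
            \<and> (3::int) ^ M dvd (x - y) \<and> cls (x - y) = c0)"
    using good_class[OF assms(3) fC clsC] by blast
  obtain r lo hi s where c0eq: "c0 = (r, lo, hi, s)" by (rule prod_cases4)
  have rK: "0 \<le> r" "r < int K" and lo: "lo = 1 \<or> lo = -1" and hi: "hi = 1 \<or> hi = -1"
    and s: "s = 1 \<or> s = -1"
    using c0C unfolding c0eq C_def by auto
  define n where "n = 2 * K"
  obtain X Y :: "nat \<Rightarrow> int" and Mb :: "nat \<Rightarrow> nat" where
    P: "\<forall>i<n. X i \<in> L \<and> Y i \<in> L \<and> X i \<noteq> Y i \<and> cls (X i - Y i) = c0
      \<and> 3 ^ (Mb i) dvd (X i - Y i) \<and> 2 * (\<bar>u\<bar> + (\<Sum>j<i. \<bar>X j - Y j\<bar>)) < 3 ^ (Mb i)"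
    and ix: "inj_on X {..<n}" and iy: "inj_on Y {..<n}" and dj: "X ` {..<n} \<inter> Y ` {..<n} = {}"
    using build[OF good, where n=n and u=u] by blast
  define d where "d i = X i - Y i" for i
  have dP: "3 ^ (Mb i) dvd d i" "2 * (\<bar>u\<bar> + (\<Sum>j<i. \<bar>d j\<bar>)) < 3 ^ (Mb i)" "d i \<noteq> 0"
     "hd (dsl (d i)) = lo" "last (dsl (d i)) = hi" "int (zsc (d i)) mod int K = r" "sgn (d i) = s"
    if "i < n" for i
    using P that unfolding d_def cls_def c0eq by auto
  have blk: "\<forall>i<n. 3 ^ (Mb i) dvd d i \<and> 2 * (\<bar>u\<bar> + (\<Sum>j<i. \<bar>d j\<bar>)) < 3 ^ (Mb i) \<and> d i \<noteq> 0
       \<and> hd (dsl (d i)) = lo \<and> last (dsl (d i)) = hi" using dP by blast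
  define J0 where "J0 = (if dsl u \<noteq> [] \<and> last (dsl u) * (s * lo) < 0 then 1 else 0::int)"
  define B where "B = int (zsc u) + J0"
  define h where "h = (int K + 1) div 2"
  define v where "v = (if hi * lo = 1 then c - B else B - 1 - c)"
  define k where "k = nat ((v * h) mod int K)"
  have h2: "2 * h = int K + 1" using K unfolding h_def by (auto elim!: oddE)
  have kK: "k < K"
  proof -
    have "0 \<le> (v*h) mod int K" "(v*h) mod int K < int K" using K by auto
    then show ?thesis unfolding k_def by (simp add: nat_less_iff)
  qed
  have k2: "int K dvd (2 * int k - v)"
  proof -
    have "int k = (v * h) mod int K" unfolding k_def using K by simp
    also have "\<dots> = v * h - int K * ((v * h) div int K)" by (simp add: minus_div_mult_eq_mod[symmetric] algebra_simps)
    finally have "2 * int k - v = v * (2 * h) - 2 * int K * ((v * h) div int K) - v" by (simp add: algebra_simps)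
    also have "\<dots> = int K * (v - 2 * ((v * h) div int K))" unfolding h2 by (simp add: algebra_simps)
    finally show ?thesis by simp
  qed
  define \<epsilon> where "\<epsilon> = (\<lambda>i. if i \<le> 2 * k \<and> odd i then -s else s)"
  have eps: "\<forall>i. \<epsilon> i = 1 \<or> \<epsilon> i = -1" using s unfolding \<epsilon>_def by auto
  define a where "a = u + (\<Sum>i<n. \<epsilon> i * d i)"
  have ch: "int (zsc a) = int (zsc u) + (\<Sum>i<n. int (zsc (d i)) + Jf u lo hi \<epsilon> i)"
    using chain[OF blk eps, of n] unfolding a_def by simp
  define S where "S = (\<Sum>i<n. int (zsc (d i)))"
  have n1: "n = Suc (n - 1)" unfolding n_def using K by simp
  define PP where "PP = (if hi * lo > 0 then 1 else 0::int)"
  define QQ where "QQ = (if hi * lo < 0 then 1 else 0::int)"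
  have Jsuc: "Jf u lo hi \<epsilon> (Suc i) = (if i < 2 * k then PP else QQ)" for i
  proof -
    have e1: "\<epsilon> i * hi * (\<epsilon> (Suc i) * lo) = (\<epsilon> i * \<epsilon> (Suc i)) * (hi * lo)" by (simp add: algebra_simps)
    have e2: "\<epsilon> i * \<epsilon> (Suc i) = (if i < 2 * k then -1 else 1)"
      unfolding \<epsilon>_def by (rule eps_prod[OF s])
    have "Jf u lo hi \<epsilon> (Suc i) = (if \<epsilon> i * hi * (\<epsilon> (Suc i) * lo) < 0 then 1 else 0)"
      unfolding Jf_def by simp
    also have "\<dots> = (if (\<epsilon> i * \<epsilon> (Suc i)) * (hi * lo) < 0 then 1 else 0)" by (simp only: e1)
    also have "\<dots> = (if i < 2 * k then PP else QQ)" unfolding e2 PP_def QQ_def by auto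
    finally show ?thesis .
  qed
  have J0eq: "Jf u lo hi \<epsilon> 0 = J0" unfolding Jf_def J0_def \<epsilon>_def by simp
  have "(\<Sum>i<n. Jf u lo hi \<epsilon> i) = J0 + (\<Sum>i<n - 1. Jf u lo hi \<epsilon> (Suc i))"
    by (subst n1, subst sum.lessThan_Suc_shift) (simp add: J0eq)
  also have "(\<Sum>i<n - 1. Jf u lo hi \<epsilon> (Suc i)) = (\<Sum>i<n - 1. if i < 2 * k then PP else QQ)"
    using Jsuc by simp
  also have "\<dots> = int (2 * k) * PP + int (n - 1 - 2 * k) * QQ"
  proof -
    have "min (2 * k) (n - 1) = 2 * k" unfolding n_def using kK by simp
    then show ?thesis by (simp add: sum_if_lt)
  qed
  finally have Jsum: "(\<Sum>i<n. Jf u lo hi \<epsilon> i) = J0 + int (2 * k) * PP + int (n - 1 - 2 * k) * QQ" by simp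
  have zs: "int (zsc a) = B + S + 2 * int k * PP + (2 * int K - 1 - 2 * int k) * QQ"
  proof -
    have "int (n - 1 - 2 * k) = 2 * int K - 1 - 2 * int k" unfolding n_def using kK by simp
    then show ?thesis using ch Jsum unfolding S_def B_def by (simp add: sum.distrib)
  qed
  have Sdv: "int K dvd S"
  proof -
    have c1: "[S = (\<Sum>i<n. r)] (mod int K)" unfolding S_def
    proof (rule cong_sum)
      fix i assume "i \<in> {..<n}"
      then have "int (zsc (d i)) mod int K = r" using dP by simp
      moreover have "r mod int K = r" using rK by simp
      ultimately show "[int (zsc (d i)) = r] (mod int K)" unfolding cong_def by simp
    qed
    have sr: "(\<Sum>i<n. r) = int K * (2 * r)" unfolding n_def by simp
    have "[S = int K * (2 * r)] (mod int K)" using c1 unfolding sr .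
    then have "int K dvd S - int K * (2 * r)" unfolding cong_iff_dvd_diff .
    then have "int K dvd S - int K * (2 * r) + int K * (2 * r)" by (rule dvd_add) simp
    then show ?thesis by simp
  qed
  have cong: "[int (zsc a) = c] (mod int K)"
    unfolding cong_iff_dvd_diff
  proof (cases "hi * lo = 1")
    case True
    then have "PP = 1" "QQ = 0" "v = c - B" unfolding PP_def QQ_def v_def by auto
    then have "int (zsc a) - c = S + (2 * int k - v)" using zs by simp
    then show "int K dvd int (zsc a) - c" using Sdv k2 by simp
  next
    case False
    then have "hi * lo = -1" using hi lo by auto
    then have "PP = 0" "QQ = 1" "v = B - 1 - c" unfolding PP_def QQ_def v_def by auto
    then have "int (zsc a) - c = S + int K * 2 - (2 * int k - v)" using zs by simp
    then show "int K dvd int (zsc a) - c" using Sdv k2 by simp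
  qed
  have "(\<Sum>i<n. \<epsilon> i * (X i - Y i)) \<in> SIP L"
    by (rule sip_mem[OF _ ix iy dj eps]) (use P in blast)
  then have asip: "a \<in> {x + u | x. x \<in> SIP L}" unfolding a_def d_def by force
  define m where "m = n - 1"
  have mn: "m < n" unfolding m_def n_def using K by simp
  have em: "\<epsilon> m = s" unfolding \<epsilon>_def m_def n_def using kK by auto
  define p where "p = u + (\<Sum>i<m. \<epsilon> i * d i)"
  have nm: "n = Suc m" unfolding m_def using n1 .
  have ap: "a = p + s * d m" unfolding a_def p_def nm using em by simp
  have pb: "\<bar>p\<bar> \<le> \<bar>u\<bar> + (\<Sum>i<m. \<bar>d i\<bar>)" unfolding p_def using sum_bound[OF eps, where j=m and d=d] by linarith
  have pb2: "2 * \<bar>p\<bar> < 3 ^ Mb m"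
  proof -
    have "2 * \<bar>p\<bar> \<le> 2 * (\<bar>u\<bar> + (\<Sum>i<m. \<bar>d i\<bar>))" using mult_left_mono[OF pb, of 2] by simp
    then show ?thesis using dP(2)[OF mn] by linarith
  qed
  have sd: "s * d m = \<bar>d m\<bar>" 
  proof -
    have "s = sgn (d m)" using dP(7)[OF mn] by simp
    then show ?thesis by (cases "d m > 0") (auto simp: sgn_if)
  qed
  obtain q where q: "d m = 3 ^ Mb m * q" using dP(1)[OF mn] by blast
  have "q \<noteq> 0" using q dP(3)[OF mn] by auto
  then have "\<bar>d m\<bar> \<ge> 3 ^ Mb m" unfolding q by (simp add: abs_mult)
  then have "a \<ge> 1" using ap sd pb2 by linarith
  then have "a \<in> A" using assms(4) asip by auto
  then show "\<exists>a\<in>A. [int (zsc a) = c] (mod int K)" using cong by blast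
qed


end
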